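(* There exists a constant $c<1$ such that, for all sufficiently large $n$, the number of $\hbar$-perfect graphs on the labelled vertex set $\{1,\dots,n\}$ is at most $2^{c\,n(n-1)/2}$.
   Context: A realization of a graph $G$ on $\{1,\dots,n\}$ is a tuple $(S_1,\dots,S_n)$ of Pauli strings (tensor products of matrices from $\{I,X,Y,Z\}$) of common length with $S_i,S_j$ anticommuting iff $i\sim j$ and commuting otherwise; every graph has one. For $w\in\mathbb{R}^n_{\ge0}$, $\beta(G,w)=\sup_\rho\sum_iw_i\operatorname{tr}(\rho S_i)^2$ over density matrices (independent of realization), $\alpha(G,w)=\max\{\sum_{i\in I}w_i:I\text{ independent}\}$, and $G$ is $\hbar$-perfect if $\beta(G,w)=\alpha(G,w)$ for all $w\ge0$. (It is known that the complement of the 7-cycle is not $\hbar$-perfect.) *)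

theory Defs
  imports Complex_Main "Jordan_Normal_Form.Matrix"
begin

datatype pauli = PI | PX | PY | PZ

fun pauli_entry :: "pauli \<Rightarrow> nat \<Rightarrow> nat \<Rightarrow> complex" where
  "pauli_entry PI r c = (if r = c then 1 else 0)"
| "pauli_entry PX r c = (if r = c then 0 else 1)"
| "pauli_entry PY r c = (if r = c then 0 else if r = 0 then - \<i> else \<i>)"
| "pauli_entry PZ r c = (if r = c then (if r = 0 then 1 else -1) else 0)"

text \<open>The matrix of a Pauli string (tensor product of its factors), of size 2^m,
  where the k-th tensor factor acts on bit k of the row/column index.\<close>
definition pauli_mat :: "pauli list \<Rightarrow> complex mat" where
  "pauli_mat ps = mat (2 ^ length ps) (2 ^ length ps)
     (\<lambda>(r, c). \<Prod>k<length ps. pauli_entry (ps ! k) (r div 2 ^ k mod 2) (c div 2 ^ k mod 2))"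

section \<open>Graphs on {0..<n} (standing for the labelled vertex set {1,...,n})\<close>

definition all_pairs :: "nat \<Rightarrow> nat set set" where
  "all_pairs n = {{i, j} | i j. i < n \<and> j < n \<and> i \<noteq> j}"

definition is_graph :: "nat \<Rightarrow> nat set set \<Rightarrow> bool" where
  "is_graph n E \<longleftrightarrow> E \<subseteq> all_pairs n"

definition realization :: "nat \<Rightarrow> nat set set \<Rightarrow> nat \<Rightarrow> (nat \<Rightarrow> pauli list) \<Rightarrow> bool" where
  "realization n E m S \<longleftrightarrow>
     (\<forall>i<n. length (S i) = m) \<and>
     (\<forall>i<n. \<forall>j<n.
        (if {i, j} \<in> E
         then pauli_mat (S i) * pauli_mat (S j) = - (pauli_mat (S j) * pauli_mat (S i))
         else pauli_mat (S i) * pauli_mat (S j) = pauli_mat (S j) * pauli_mat (S i)))"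

definition mat_trace :: "complex mat \<Rightarrow> complex" where
  "mat_trace A = (\<Sum>i<dim_row A. A $$ (i, i))"

definition conj_transpose :: "complex mat \<Rightarrow> complex mat" where
  "conj_transpose A = mat (dim_col A) (dim_row A) (\<lambda>(i, j). cnj (A $$ (j, i)))"

definition density_mat :: "nat \<Rightarrow> complex mat \<Rightarrow> bool" where
  "density_mat d \<rho> \<longleftrightarrow>
     \<rho> \<in> carrier_mat d d \<and> conj_transpose \<rho> = \<rho> \<and>
     (\<forall>v \<in> carrier_vec d. 0 \<le> Re ((\<rho> *\<^sub>v v) \<bullet>c v)) \<and>
     mat_trace \<rho> = 1"

text \<open>beta(G,w) computed from a realization S of length m.  tr(rho S_i) is real
  (both Hermitian), so we take its real part.\<close>
definition beta_real :: "nat \<Rightarrow> nat \<Rightarrow> (nat \<Rightarrow> pauli list) \<Rightarrow> (nat \<Rightarrow> real) \<Rightarrow> real" where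
  "beta_real n m S w =
     Sup ((\<lambda>\<rho>. \<Sum>i<n. w i * (Re (mat_trace (\<rho> * pauli_mat (S i))))\<^sup>2)
          ` {\<rho>. density_mat (2 ^ m) \<rho>})"

definition independent :: "nat \<Rightarrow> nat set set \<Rightarrow> nat set \<Rightarrow> bool" where
  "independent n E I \<longleftrightarrow> I \<subseteq> {..<n} \<and> (\<forall>i\<in>I. \<forall>j\<in>I. {i, j} \<notin> E)"

definition alpha :: "nat \<Rightarrow> nat set set \<Rightarrow> (nat \<Rightarrow> real) \<Rightarrow> real" where
  "alpha n E w = Max ((\<lambda>I. \<Sum>i\<in>I. w i) ` {I. independent n E I})"

text \<open>hbar-perfect: beta = alpha for all nonnegative weights. Since beta does not
  depend on the realization (and realizations exist), we require it for every realization.\<close>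
definition hbar_perfect :: "nat \<Rightarrow> nat set set \<Rightarrow> bool" where
  "hbar_perfect n E \<longleftrightarrow>
     (\<forall>m S w. realization n E m S \<longrightarrow> (\<forall>i<n. 0 \<le> w i) \<longrightarrow>
        beta_real n m S w = alpha n E w)"

end

theory Submission
  imports Defs
begin

lemma sum_bits:
  "(\<Sum>(l::nat)<2^m. \<Prod>k<m. f k (l div 2^k mod 2)) = (\<Prod>k<m. \<Sum>z<2. f k z :: 'a::comm_semiring_1)"
proof (induction m arbitrary: f)
  case 0
  then show ?case by simp
next
  case (Suc m)
  have e: "(\<Prod>k<Suc m. f k (l div 2^k mod 2)) = f 0 (l mod 2) * (\<Prod>k<m. f (Suc k) ((l div 2) div 2^k mod 2))" for l
    unfolding prod.lessThan_Suc_shift by (simp add: div_mult2_eq del: prod.lessThan_Suc)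
  have "(\<Sum>l<2^Suc m. \<Prod>k<Suc m. f k (l div 2^k mod 2))
      = (\<Sum>l<2^m * 2. f 0 (l mod 2) * (\<Prod>k<m. f (Suc k) ((l div 2) div 2^k mod 2)))"
    unfolding e by (simp only: power_Suc2)
  also have "\<dots> = (\<Sum>q<2^m. \<Sum>l\<in>{q*2..<q*2+2}. f 0 (l mod 2) * (\<Prod>k<m. f (Suc k) ((l div 2) div 2^k mod 2)))"
    by (rule sum.nat_group[symmetric])
  also have "\<dots> = (\<Sum>q<2^m. (f 0 0 + f 0 1) * (\<Prod>k<m. f (Suc k) (q div 2^k mod 2)))"
  proof (rule sum.cong[OF refl])
    fix q :: nat
    have "{q*2..<q*2+2} = {q*2, q*2+1}" by auto
    moreover have "(q*2+1) mod 2 = 1" "(q*2) mod 2 = 0" "(q*2+1) div 2 = q" "(q*2) div 2 = q" by presburger+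
    ultimately show "(\<Sum>l\<in>{q*2..<q*2+2}. f 0 (l mod 2) * (\<Prod>k<m. f (Suc k) ((l div 2) div 2^k mod 2)))
       = (f 0 0 + f 0 1) * (\<Prod>k<m. f (Suc k) (q div 2^k mod 2))"
      by (simp only: sum.insert finite.emptyI insert_not_empty empty_iff sum.empty) (simp add: algebra_simps)
  qed
  also have "\<dots> = (f 0 0 + f 0 1) * (\<Prod>k<m. \<Sum>z<2. f (Suc k) z)"
    using Suc.IH[of "\<lambda>k. f (Suc k)"] by (simp add: sum_distrib_left[symmetric])
  also have "\<dots> = (\<Prod>k<Suc m. \<Sum>z<2. f k z)"
    by (simp only: prod.lessThan_Suc_shift) (simp add: numeral_2_eq_2)
  finally show ?case .
qed

definition pm1 :: "pauli \<Rightarrow> pauli \<Rightarrow> nat \<Rightarrow> nat \<Rightarrow> complex" where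
  "pm1 a b x y = (\<Sum>z<2. pauli_entry a x z * pauli_entry b z y)"

lemma pauli_mat_dim[simp]:
  "pauli_mat ps \<in> carrier_mat (2^length ps) (2^length ps)"
  "dim_row (pauli_mat ps) = 2^length ps" "dim_col (pauli_mat ps) = 2^length ps"
  by (auto simp: pauli_mat_def)

lemma pauli_mat_index:
  "r < 2^length ps \<Longrightarrow> c < 2^length ps \<Longrightarrow> pauli_mat ps $$ (r,c) =
    (\<Prod>k<length ps. pauli_entry (ps ! k) (r div 2 ^ k mod 2) (c div 2 ^ k mod 2))"
  by (simp add: pauli_mat_def)

lemma pauli_mult:
  assumes "length qs = length ps"
  shows "pauli_mat ps * pauli_mat qs = mat (2^length ps) (2^length ps)
     (\<lambda>(r,c). \<Prod>k<length ps. pm1 (ps!k) (qs!k) (r div 2^k mod 2) (c div 2^k mod 2))"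
proof (rule eq_matI)
  fix r c assume r: "r < dim_row (mat (2^length ps) (2^length ps)
     (\<lambda>(r,c). \<Prod>k<length ps. pm1 (ps!k) (qs!k) (r div 2^k mod 2) (c div 2^k mod 2)))"
    and c: "c < dim_col (mat (2^length ps) (2^length ps)
     (\<lambda>(r,c). \<Prod>k<length ps. pm1 (ps!k) (qs!k) (r div 2^k mod 2) (c div 2^k mod 2)))"
  let ?m = "length ps"
  have "(pauli_mat ps * pauli_mat qs) $$ (r,c) = (\<Sum>l<2^?m. pauli_mat ps $$ (r,l) * pauli_mat qs $$ (l,c))"
    using r c assms by (simp add: scalar_prod_def lessThan_atLeast0)
  also have "\<dots> = (\<Sum>l<2^?m. \<Prod>k<?m. pauli_entry (ps!k) (r div 2^k mod 2) (l div 2^k mod 2) *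
        pauli_entry (qs!k) (l div 2^k mod 2) (c div 2^k mod 2))"
    using r c assms by (simp add: pauli_mat_index prod.distrib)
  also have "\<dots> = (\<Prod>k<?m. pm1 (ps!k) (qs!k) (r div 2^k mod 2) (c div 2^k mod 2))"
    by (subst sum_bits) (simp add: pm1_def)
  finally show "(pauli_mat ps * pauli_mat qs) $$ (r,c) = mat (2^length ps) (2^length ps)
     (\<lambda>(r,c). \<Prod>k<length ps. pm1 (ps!k) (qs!k) (r div 2^k mod 2) (c div 2^k mod 2)) $$ (r,c)"
    using r c by simp
qed (use assms in auto)

definition eps :: "pauli \<Rightarrow> pauli \<Rightarrow> complex" where
  "eps a b = (if a \<noteq> PI \<and> b \<noteq> PI \<and> a \<noteq> b then -1 else 1)"

lemma less2_cases: "(x::nat) < 2 \<Longrightarrow> x = 0 \<or> x = 1" by auto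

lemma pm1_expand: "pm1 a b x y = pauli_entry a x 0 * pauli_entry b 0 y + pauli_entry a x 1 * pauli_entry b 1 y"
  by (simp add: pm1_def numeral_2_eq_2 lessThan_Suc)

lemma pm1_comm00: "pm1 a b 0 0 = eps a b * pm1 b a 0 0"
  by (cases a; cases b; simp add: pm1_expand eps_def)
lemma pm1_comm01: "pm1 a b 0 1 = eps a b * pm1 b a 0 1"
  by (cases a; cases b; simp add: pm1_expand eps_def)
lemma pm1_comm10: "pm1 a b 1 0 = eps a b * pm1 b a 1 0"
  by (cases a; cases b; simp add: pm1_expand eps_def)
lemma pm1_comm11: "pm1 a b 1 1 = eps a b * pm1 b a 1 1"
  by (cases a; cases b; simp add: pm1_expand eps_def)
lemma pm1_same00: "pm1 a a 0 0 = 1" by (cases a; simp add: pm1_expand)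
lemma pm1_same01: "pm1 a a 0 1 = 0" by (cases a; simp add: pm1_expand)
lemma pm1_same10: "pm1 a a 1 0 = 0" by (cases a; simp add: pm1_expand)
lemma pm1_same11: "pm1 a a 1 1 = 1" by (cases a; simp add: pm1_expand)
lemma pm1_same01': "pm1 a a 0 (Suc 0) = 0" by (cases a; simp add: pm1_expand)
lemma pm1_same10': "pm1 a a (Suc 0) 0 = 0" by (cases a; simp add: pm1_expand)
lemma pm1_same11': "pm1 a a (Suc 0) (Suc 0) = 1" by (cases a; simp add: pm1_expand)

lemma pm1_comm: assumes "x < 2" "y < 2" shows "pm1 a b x y = eps a b * pm1 b a x y"
proof -
  have "x = 0 \<or> x = 1" "y = 0 \<or> y = 1" using assms by linarith+
  then show ?thesis
    by (elim disjE) (metis pm1_comm00 pm1_comm01 pm1_comm10 pm1_comm11)+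
qed

lemma pm1_same: assumes "x < 2" "y < 2" shows "pm1 a a x y = (if x = y then 1 else 0)"
proof -
  have "x = 0 \<or> x = 1" "y = 0 \<or> y = 1" using assms by linarith+
  then show ?thesis
    by (elim disjE) (simp_all add: pm1_same00 pm1_same01' pm1_same10' pm1_same11')
qed

lemma pauli_comm:
  assumes "length qs = length ps"
  shows "pauli_mat ps * pauli_mat qs = (\<Prod>k<length ps. eps (ps!k) (qs!k)) \<cdot>\<^sub>m (pauli_mat qs * pauli_mat ps)"
proof -
  have "(\<Prod>k<length ps. pm1 (ps!k) (qs!k) (r div 2^k mod 2) (c div 2^k mod 2)) =
    (\<Prod>k<length ps. eps (ps!k) (qs!k)) * (\<Prod>k<length ps. pm1 (qs!k) (ps!k) (r div 2^k mod 2) (c div 2^k mod 2))" for r c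
  proof -
    have "(\<Prod>k<length ps. pm1 (ps!k) (qs!k) (r div 2^k mod 2) (c div 2^k mod 2)) =
      (\<Prod>k<length ps. eps (ps!k) (qs!k) * pm1 (qs!k) (ps!k) (r div 2^k mod 2) (c div 2^k mod 2))"
      by (rule prod.cong[OF refl], rule pm1_comm) simp_all
    then show ?thesis by (simp only: prod.distrib)
  qed
  note * = this
  have e1: "pauli_mat ps * pauli_mat qs = mat (2^length ps) (2^length ps)
     (\<lambda>(r,c). \<Prod>k<length ps. pm1 (ps!k) (qs!k) (r div 2^k mod 2) (c div 2^k mod 2))"
    by (rule pauli_mult[OF assms])
  have e2: "pauli_mat qs * pauli_mat ps = mat (2^length ps) (2^length ps)
     (\<lambda>(r,c). \<Prod>k<length ps. pm1 (qs!k) (ps!k) (r div 2^k mod 2) (c div 2^k mod 2))"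
    using pauli_mult[of ps qs] assms by simp
  show ?thesis unfolding e1 e2
    by (rule eq_matI) (simp_all only: index_smult_mat index_mat dim_row_mat dim_col_mat * split)
qed

lemma bits_eq:
  assumes "(r::nat) < 2^m" "c < 2^m" "\<forall>k<m. r div 2^k mod 2 = c div 2^k mod 2"
  shows "r = c"
proof (rule bit_eqI)
  fix k
  show "bit r k = bit c k"
  proof (cases "k < m")
    case True
    then show ?thesis using assms(3) by (auto simp: bit_iff_odd odd_iff_mod_2_eq_one)
  next
    case False
    then have "(2::nat)^m \<le> 2^k" by (simp add: power_increasing)
    then have "r div 2^k = 0" "c div 2^k = 0" using assms(1,2) by (meson div_less order_less_le_trans)+
    then show ?thesis by (simp add: bit_iff_odd)
  qed
qed

lemma pauli_sq: "pauli_mat ps * pauli_mat ps = 1\<^sub>m (2^length ps)"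
proof -
  have "(\<Prod>k<length ps. pm1 (ps!k) (ps!k) (r div 2^k mod 2) (c div 2^k mod 2)) = (if r = c then 1 else 0)"
    if rc: "r < 2^length ps" "c < 2^length ps" for r c
  proof (cases "r = c")
    case True then show ?thesis by (simp add: pm1_same)
  next
    case False
    then obtain k where k: "k < length ps" "r div 2^k mod 2 \<noteq> c div 2^k mod 2"
      using bits_eq[OF rc] by blast
    then show ?thesis using False
      by (intro trans[OF prod_zero]) (auto simp: pm1_same intro!: bexI[of _ k])
  qed
  note * = this
  have e1: "pauli_mat ps * pauli_mat ps = mat (2^length ps) (2^length ps)
     (\<lambda>(r,c). \<Prod>k<length ps. pm1 (ps!k) (ps!k) (r div 2^k mod 2) (c div 2^k mod 2))"
    by (rule pauli_mult) simp
  show ?thesis unfolding e1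
    by (rule eq_matI) (simp_all only: index_one_mat index_mat dim_row_mat dim_col_mat * split)
qed

lemma eps_pm: "eps a b = 1 \<or> eps a b = -1" by (simp add: eps_def)

lemma prod_eps_pm: "(\<Prod>k\<in>K. eps (f k) (g k)) = 1 \<or> (\<Prod>k\<in>K. eps (f k) (g k)) = -1"
proof (induction K rule: infinite_finite_induct)
  case (insert x F)
  then show ?case using eps_pm[of "f x" "g x"] by auto
qed auto

lemma pauli_nonzero: "pauli_mat ps * pauli_mat qs \<noteq> 0\<^sub>m (2^length ps) (2^length ps)"
  if "length qs = length ps"
proof
  let ?A = "pauli_mat ps" and ?B = "pauli_mat qs"
  assume h: "?A * ?B = 0\<^sub>m (2^length ps) (2^length ps)"
  have cA: "?A \<in> carrier_mat (2^length ps) (2^length ps)" and cB: "?B \<in> carrier_mat (2^length ps) (2^length ps)"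
    using that pauli_mat_dim(1)[of qs] by auto
  have "?B = (?A * ?A) * ?B" using pauli_sq[of ps] cB by (simp add: left_mult_one_mat)
  also have "\<dots> = ?A * (?A * ?B)" by (rule assoc_mult_mat[OF cA cA cB])
  also have "\<dots> = 0\<^sub>m (2^length ps) (2^length ps)" using h cA by simp
  finally have "?B * ?B = 0\<^sub>m (2^length ps) (2^length ps) * ?B" by simp
  then have "(1\<^sub>m (2^length qs) :: complex mat) = 0\<^sub>m (2^length ps) (2^length ps)" using pauli_sq[of qs] cB by (simp add: left_mult_zero_mat)
  then have "(1\<^sub>m (2^length qs)) $$ (0,0) = (0\<^sub>m (2^length ps) (2^length ps) :: complex mat) $$ (0,0)" by simp
  moreover have "(1\<^sub>m (2^length qs) :: complex mat) $$ (0,0) = 1" by (simp del: index_one_mat add: index_one_mat(1))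
  moreover have "(0\<^sub>m (2^length ps) (2^length ps) :: complex mat) $$ (0,0) = 0" by (simp del: index_zero_mat add: index_zero_mat(1))
  ultimately show False by simp
qed

lemma anticomm_iff:
  assumes "length qs = length ps"
  shows "(pauli_mat ps * pauli_mat qs = - (pauli_mat qs * pauli_mat ps)) \<longleftrightarrow> (\<Prod>k<length ps. eps (ps!k) (qs!k)) = -1"
    and "(pauli_mat ps * pauli_mat qs = pauli_mat qs * pauli_mat ps) \<longleftrightarrow> (\<Prod>k<length ps. eps (ps!k) (qs!k)) = 1"
proof -
  let ?e = "\<Prod>k<length ps. eps (ps!k) (qs!k)"
  let ?M = "pauli_mat qs * pauli_mat ps"
  have M: "?M \<in> carrier_mat (2^length ps) (2^length ps)" using assms
    by (metis mult_carrier_mat pauli_mat_dim(1))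
  have nz: "?M \<noteq> 0\<^sub>m (2^length ps) (2^length ps)" using pauli_nonzero[of ps qs] assms
    pauli_nonzero[of qs ps] by simp
  have eq: "pauli_mat ps * pauli_mat qs = ?e \<cdot>\<^sub>m ?M" by (rule pauli_comm[OF assms])
  have neq: "?M \<noteq> - ?M"
  proof
    assume "?M = - ?M"
    then have "\<forall>i<2^length ps. \<forall>j<2^length ps. ?M $$ (i,j) = - ?M $$ (i,j)" using M
      by (metis carrier_matD index_uminus_mat(1))
    then have "\<forall>i<2^length ps. \<forall>j<2^length ps. ?M $$ (i,j) = 0" by auto
    then have "?M = 0\<^sub>m (2^length ps) (2^length ps)" using M by (auto intro!: eq_matI)
    then show False using nz by simp
  qed
  have m1: "- ?M = (-1) \<cdot>\<^sub>m ?M" using M by auto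
  have p1: "?M = 1 \<cdot>\<^sub>m ?M" using M by (auto intro!: eq_matI)
  have d: "?e = 1 \<or> ?e = -1" by (rule prod_eps_pm)
  have c1: "?e = 1 \<Longrightarrow> pauli_mat ps * pauli_mat qs = ?M" using eq p1 by simp
  have c2: "?e = -1 \<Longrightarrow> pauli_mat ps * pauli_mat qs = - ?M" using eq m1 by simp
  show "(pauli_mat ps * pauli_mat qs = - ?M) \<longleftrightarrow> ?e = -1"
  proof
    assume h: "pauli_mat ps * pauli_mat qs = - ?M"
    show "?e = -1"
    proof (rule ccontr)
      assume "?e \<noteq> -1" then have "?e = 1" using d by blast
      then have "pauli_mat ps * pauli_mat qs = ?M" by (rule c1)
      then show False using h neq by metis
    qed
  qed (rule c2)
  show "(pauli_mat ps * pauli_mat qs = ?M) \<longleftrightarrow> ?e = 1"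
  proof
    assume h: "pauli_mat ps * pauli_mat qs = ?M"
    show "?e = 1"
    proof (rule ccontr)
      assume "?e \<noteq> 1" then have "?e = -1" using d by blast
      then have "pauli_mat ps * pauli_mat qs = - ?M" by (rule c2)
      then show False using h neq by metis
    qed
  qed (rule c1)
qed

definition c7b :: "nat \<Rightarrow> nat \<Rightarrow> bool" where
  "c7b t s \<longleftrightarrow> (t + 7 - s) mod 7 \<in> {2,3,4,5}"

definition Tstr :: "nat \<Rightarrow> pauli list" where
  "Tstr t = [[PI,PI,PX],[PI,PX,PI],[PX,PX,PZ],[PZ,PZ,PZ],[PI,PZ,PZ],[PX,PZ,PZ],[PZ,PZ,PX]] ! t"

lemma less7_cases: "(t::nat) < 7 \<Longrightarrow> t = 0 \<or> t = 1 \<or> t = 2 \<or> t = 3 \<or> t = 4 \<or> t = 5 \<or> t = 6"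
  by auto

lemma prod3: "(\<Prod>(k::nat)<3. g k) = g 0 * g 1 * (g 2 :: 'a::comm_monoid_mult)"
  by (simp add: numeral_3_eq_3 numeral_2_eq_2 lessThan_Suc mult.commute mult.left_commute)

lemma Tstr_len: "t < 7 \<Longrightarrow> length (Tstr t) = 3"
  by (drule less7_cases) (auto simp: Tstr_def)

lemma Tstr_eps: assumes "t < 7" "s < 7"
  shows "(\<Prod>k<3. eps (Tstr t ! k) (Tstr s ! k)) = (if c7b t s then -1 else 1)"
  using less7_cases[OF assms(1)] less7_cases[OF assms(2)]
  by (elim disjE) (simp_all add: prod3 Tstr_def eps_def c7b_def)

definition uvec :: "nat \<Rightarrow> real" where
  "uvec r = (if r < 8 then [-1,2,5,-2,2,-1,-2,-1] ! r else 0)"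

definition Tval :: "nat \<Rightarrow> real" where
  "Tval t = [-24,-24,24,-24,-24,24,24] ! t"

lemma sum8: "(\<Sum>(k::nat)<8. g k) = g 0 + g 1 + g 2 + g 3 + g 4 + g 5 + g 6 + (g 7 :: 'a::comm_monoid_add)"
  by (simp add: numeral_eq_Suc lessThan_Suc add.commute add.left_commute)

lemma Tval_eq: assumes "t < 7"
  shows "(\<Sum>r<8. \<Sum>c<8. complex_of_real (uvec r * uvec c) * pauli_mat (Tstr t) $$ (c, r)) = complex_of_real (Tval t)"
  using less7_cases[OF assms]
  by (elim disjE) (simp_all add: sum8 pauli_mat_index Tstr_def prod3 uvec_def Tval_def)

lemma Tval_sq: "t < 7 \<Longrightarrow> (Tval t / 44)^2 = 36/121"
  by (drule less7_cases) (auto simp: Tval_def power2_eq_square)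

lemma uvec_sq: "(\<Sum>r<8. (uvec r)^2) = 44"
  by (simp add: sum8 uvec_def)

definition blk :: "(nat \<Rightarrow> nat) \<Rightarrow> nat \<Rightarrow> pauli list" where
  "blk \<phi> i = (if i \<in> \<phi> ` {..<7} then Tstr (the_inv_into {..<7} \<phi> i) else [PI,PI,PI])"

definition pop :: "nat \<Rightarrow> nat set set \<Rightarrow> (nat \<Rightarrow> nat) \<Rightarrow> nat \<Rightarrow> nat \<Rightarrow> pauli" where
  "pop n E \<phi> i q = (if q div n < q mod n \<and> (i = q div n \<or> i = q mod n) \<and> {q div n, q mod n} \<in> E
       \<and> \<not> (q div n \<in> \<phi> ` {..<7} \<and> q mod n \<in> \<phi> ` {..<7})
     then (if i \<in> \<phi> ` {..<7} \<or> (i = q div n \<and> q mod n \<notin> \<phi> ` {..<7}) then PZ else PX) else PI)"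

definition Sreal :: "nat \<Rightarrow> nat set set \<Rightarrow> (nat \<Rightarrow> nat) \<Rightarrow> nat \<Rightarrow> pauli list" where
  "Sreal n E \<phi> i = blk \<phi> i @ map (pop n E \<phi> i) [0..<n*n]"

lemma prod_lessThan_add: "(\<Prod>(k::nat)<a+b. f k) = (\<Prod>k<a. f k) * (\<Prod>k<b. f (a+k) :: 'a::comm_monoid_mult)"
  by (induction b) (simp_all add: mult.assoc)

lemma blk_len: "inj_on \<phi> {..<7} \<Longrightarrow> length (blk \<phi> i) = 3"
  using the_inv_into_into[of \<phi> "{..<7}" i "{..<7}"]
  by (auto simp: blk_def Tstr_len)

lemma Sreal_len: "inj_on \<phi> {..<7} \<Longrightarrow> length (Sreal n E \<phi> i) = 3 + n*n"
  by (simp add: Sreal_def blk_len)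

lemma eps_PI[simp]: "eps PI x = 1" "eps x PI = 1" "eps x x = 1"
  by (simp_all add: eps_def)

lemma eps_sym: "eps a b = eps b a" by (auto simp: eps_def)

lemma eps_Sreal:
  assumes "inj_on \<phi> {..<7}"
  shows "(\<Prod>k<3+n*n. eps (Sreal n E \<phi> i ! k) (Sreal n E \<phi> j ! k)) =
    (\<Prod>k<3. eps (blk \<phi> i ! k) (blk \<phi> j ! k)) * (\<Prod>q<n*n. eps (pop n E \<phi> i q) (pop n E \<phi> j q))"
  unfolding prod_lessThan_add
proof -
  have "(\<Prod>k<3. eps (Sreal n E \<phi> i ! k) (Sreal n E \<phi> j ! k)) = (\<Prod>k<3. eps (blk \<phi> i ! k) (blk \<phi> j ! k))"
    by (rule prod.cong) (simp_all add: Sreal_def nth_append blk_len[OF assms])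
  moreover have "(\<Prod>k<n*n. eps (Sreal n E \<phi> i ! (3+k)) (Sreal n E \<phi> j ! (3+k))) = (\<Prod>q<n*n. eps (pop n E \<phi> i q) (pop n E \<phi> j q))"
    by (rule prod.cong) (simp_all add: Sreal_def nth_append blk_len[OF assms])
  ultimately show "(\<Prod>k<3. eps (Sreal n E \<phi> i ! k) (Sreal n E \<phi> j ! k)) *
    (\<Prod>k<n*n. eps (Sreal n E \<phi> i ! (3+k)) (Sreal n E \<phi> j ! (3+k))) =
    (\<Prod>k<3. eps (blk \<phi> i ! k) (blk \<phi> j ! k)) * (\<Prod>q<n*n. eps (pop n E \<phi> i q) (pop n E \<phi> j q))"
    by simp
qed

lemma eps_blk:
  assumes "inj_on \<phi> {..<7}"
  shows "(\<Prod>k<3. eps (blk \<phi> i ! k) (blk \<phi> j ! k)) =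
    (if i \<in> \<phi> ` {..<7} \<and> j \<in> \<phi> ` {..<7} then
       (if c7b (the_inv_into {..<7} \<phi> i) (the_inv_into {..<7} \<phi> j) then -1 else 1) else 1)"
proof (cases "i \<in> \<phi> ` {..<7} \<and> j \<in> \<phi> ` {..<7}")
  case True
  then show ?thesis
    using Tstr_eps[of "the_inv_into {..<7} \<phi> i" "the_inv_into {..<7} \<phi> j"]
      the_inv_into_into[OF assms, of i "{..<7}"] the_inv_into_into[OF assms, of j "{..<7}"]
    by (simp add: blk_def)
next
  case False
  then show ?thesis by (auto simp: blk_def prod3)
qed

lemma pop_q:
  assumes "(a::nat) < n" "b < n"
  shows "(a*n+b) div n = a" "(a*n+b) mod n = b"
  using assms by simp_all

lemma eps_pop:
  assumes "i < n" "j < n"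
  shows "(\<Prod>q<n*n. eps (pop n E \<phi> i q) (pop n E \<phi> j q)) =
    (if i \<noteq> j \<and> {i,j} \<in> E \<and> \<not> (i \<in> \<phi> ` {..<7} \<and> j \<in> \<phi> ` {..<7}) then -1 else 1)"
proof (cases "i = j")
  case True
  then show ?thesis by simp
next
  case False
  define a where "a = min i j"
  define b where "b = max i j"
  have ab: "a < b" "a < n" "b < n" "{a,b} = {i,j}" using False assms by (auto simp: a_def b_def)
  define q0 where "q0 = a*n+b"
  have q0: "q0 div n = a" "q0 mod n = b" "q0 < n*n"
  proof -
    show "q0 div n = a" "q0 mod n = b" using ab pop_q by (simp_all add: q0_def)
    have "a*n + b < a*n + n" using ab by simp
    also have "\<dots> = (a+1)*n" by simp
    also have "\<dots> \<le> n*n" using ab mult_le_mono1[of "a+1" n n] by simp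
    finally show "q0 < n*n" by (simp add: q0_def)
  qed
  have others: "eps (pop n E \<phi> i q) (pop n E \<phi> j q) = 1" if "q \<noteq> q0" for q
  proof (rule ccontr)
    assume "eps (pop n E \<phi> i q) (pop n E \<phi> j q) \<noteq> 1"
    then have ni: "pop n E \<phi> i q \<noteq> PI" "pop n E \<phi> j q \<noteq> PI" by (auto simp: eps_def)
    then have h: "q div n < q mod n" "i = q div n \<or> i = q mod n" "j = q div n \<or> j = q mod n"
      by (auto simp: pop_def split: if_splits)
    then have "q div n = a" "q mod n = b" using False by (auto simp: a_def b_def)
    then have "q = q0" unfolding q0_def by (metis div_mult_mod_eq mult.commute)
    then show False using that by simp
  qed
  have "(\<Prod>q<n*n. eps (pop n E \<phi> i q) (pop n E \<phi> j q)) = eps (pop n E \<phi> i q0) (pop n E \<phi> j q0)"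
    using q0(3) others by (subst prod.remove[of _ q0]) (auto intro!: prod.neutral)
  also have "\<dots> = (if {i,j} \<in> E \<and> \<not> (i \<in> \<phi> ` {..<7} \<and> j \<in> \<phi> ` {..<7}) then -1 else 1)"
    using False ab unfolding pop_def q0(1,2) a_def b_def
    by (cases "i < j") (auto simp: eps_def insert_commute min_def max_def)
  finally show ?thesis using False by simp
qed

lemma c7b_irrefl: "\<not> c7b t t" by (simp add: c7b_def)

lemma graph_no_loop: "is_graph n E \<Longrightarrow> {i} \<notin> E"
  by (auto simp: is_graph_def all_pairs_def doubleton_eq_iff)

lemma eps_total:
  assumes g: "is_graph n E" and inj: "inj_on \<phi> {..<7}"
    and pat: "\<forall>t<7. \<forall>s<7. t \<noteq> s \<longrightarrow> ({\<phi> t, \<phi> s} \<in> E \<longleftrightarrow> c7b t s)"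
    and ij: "i < n" "j < n"
  shows "(\<Prod>k<3+n*n. eps (Sreal n E \<phi> i ! k) (Sreal n E \<phi> j ! k)) = (if {i,j} \<in> E then -1 else 1)"
proof -
  let ?H = "\<phi> ` {..<7}"
  let ?\<psi> = "the_inv_into {..<7} \<phi>"
  have HH: "{i,j} \<in> E \<longleftrightarrow> c7b (?\<psi> i) (?\<psi> j)" if "i \<in> ?H" "j \<in> ?H" "i \<noteq> j"
  proof -
    have "?\<psi> i < 7" "?\<psi> j < 7" using the_inv_into_into[OF inj] that by auto
    moreover have "\<phi> (?\<psi> i) = i" "\<phi> (?\<psi> j) = j" using f_the_inv_into_f[OF inj] that by auto
    moreover have "?\<psi> i \<noteq> ?\<psi> j" using calculation that by metis
    ultimately show ?thesis using pat by metis
  qed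
  show ?thesis
    unfolding eps_Sreal[OF inj] eps_blk[OF inj] eps_pop[OF ij]
    using HH graph_no_loop[OF g, of i] c7b_irrefl by auto
qed

lemma realization_Sreal:
  assumes g: "is_graph n E" and inj: "inj_on \<phi> {..<7}"
    and pat: "\<forall>t<7. \<forall>s<7. t \<noteq> s \<longrightarrow> ({\<phi> t, \<phi> s} \<in> E \<longleftrightarrow> c7b t s)"
  shows "realization n E (3+n*n) (Sreal n E \<phi>)"
  unfolding realization_def
proof (intro conjI allI impI)
  fix i show "length (Sreal n E \<phi> i) = 3 + n*n" by (rule Sreal_len[OF inj])
next
  fix i j assume ij: "i < n" "j < n"
  have l: "length (Sreal n E \<phi> j) = length (Sreal n E \<phi> i)" by (simp add: Sreal_len[OF inj])
  have e: "(\<Prod>k<length (Sreal n E \<phi> i). eps (Sreal n E \<phi> i ! k) (Sreal n E \<phi> j ! k)) = (if {i,j} \<in> E then -1 else 1)"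
    using eps_total[OF g inj pat ij] by (simp add: Sreal_len[OF inj])
  show "if {i, j} \<in> E
       then pauli_mat (Sreal n E \<phi> i) * pauli_mat (Sreal n E \<phi> j) = - (pauli_mat (Sreal n E \<phi> j) * pauli_mat (Sreal n E \<phi> i))
       else pauli_mat (Sreal n E \<phi> i) * pauli_mat (Sreal n E \<phi> j) = pauli_mat (Sreal n E \<phi> j) * pauli_mat (Sreal n E \<phi> i)"
    using anticomm_iff[OF l] e by simp
qed

lemma sum_two:
  assumes "a < (d::nat)" "b < d" "a \<noteq> b"
  shows "(\<Sum>k\<in>{0..<d}. f k * (if k = a then 1 else if k = b then z else 0)) = f a + f b * (z::complex)"
proof -
  have "(\<Sum>k\<in>{0..<d}. f k * (if k = a then 1 else if k = b then z else 0)) =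
        (\<Sum>k\<in>{0..<d}. (if k = a then f k else 0) + (if k = b then f k * z else 0))"
    using assms(3) by (intro sum.cong) auto
  also have "\<dots> = f a + f b * z" using assms by (simp add: sum.distrib sum.delta)
  finally show ?thesis .
qed

lemma quad_form:
  fixes z :: complex and A :: "complex mat"
  assumes A: "A \<in> carrier_mat d d" and ab: "a < d" "b < d" "a \<noteq> b"
  defines "x \<equiv> vec d (\<lambda>k. if k = a then 1 else if k = b then z else 0)"
  shows "(A *\<^sub>v x) \<bullet>c x = A $$ (a,a) + A $$ (a,b) * z + (A $$ (b,a) + A $$ (b,b) * z) * cnj z"
proof -
  have Ax: "(A *\<^sub>v x) $ k = A $$ (k,a) + A $$ (k,b) * z" if "k < d" for k
  proof -
    have "(A *\<^sub>v x) $ k = (\<Sum>l\<in>{0..<d}. A $$ (k,l) * (if l = a then 1 else if l = b then z else 0))"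
      using A that by (simp add: scalar_prod_def x_def)
    also have "\<dots> = A $$ (k,a) + A $$ (k,b) * z" by (rule sum_two[OF ab])
    finally show ?thesis .
  qed
  have "(A *\<^sub>v x) \<bullet>c x = (\<Sum>k\<in>{0..<d}. (A *\<^sub>v x) $ k * cnj (if k = a then 1 else if k = b then z else 0))"
    by (simp add: scalar_prod_def x_def)
  also have "\<dots> = (\<Sum>k\<in>{0..<d}. (A $$ (k,a) + A $$ (k,b) * z) * (if k = a then 1 else if k = b then cnj z else 0))"
    by (intro sum.cong) (auto simp: Ax)
  also have "\<dots> = (A $$ (a,a) + A $$ (a,b) * z) + (A $$ (b,a) + A $$ (b,b) * z) * cnj z"
    by (rule sum_two[OF ab])
  finally show ?thesis by simp
qed

lemma density_herm:
  assumes "density_mat d \<rho>" "a < d" "b < d"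
  shows "cnj (\<rho> $$ (b,a)) = \<rho> $$ (a,b)"
proof -
  have "conj_transpose \<rho> $$ (a,b) = \<rho> $$ (a,b)" using assms(1) by (simp add: density_mat_def)
  moreover have "\<rho> \<in> carrier_mat d d" using assms(1) by (simp add: density_mat_def)
  then have "conj_transpose \<rho> $$ (a,b) = cnj (\<rho> $$ (b,a))" using assms(2,3) by (simp add: conj_transpose_def)
  ultimately show ?thesis by simp
qed

lemma density_diag:
  assumes dm: "density_mat d \<rho>" and a: "a < d"
  shows "Im (\<rho> $$ (a,a)) = 0" "0 \<le> Re (\<rho> $$ (a,a))" "Re (\<rho> $$ (a,a)) \<le> 1"
proof -
  show im: "Im (\<rho> $$ (a,a)) = 0" using density_herm[OF dm a a]
    by (metis cnj.simps(2) neg_equal_zero)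
  have C: "\<rho> \<in> carrier_mat d d" using dm by (simp add: density_mat_def)
  have psd: "\<forall>v \<in> carrier_vec d. 0 \<le> Re ((\<rho> *\<^sub>v v) \<bullet>c v)" using dm by (simp add: density_mat_def)
  have nn: "0 \<le> Re (\<rho> $$ (k,k))" if "k < d" for k
  proof (cases "d = 1")
    case True
    then have k0: "k = 0" using that by simp
    let ?x = "vec d (\<lambda>l. if l = 0 then 1 else 0) :: complex vec"
    have "(\<rho> *\<^sub>v ?x) \<bullet>c ?x = \<rho> $$ (0,0)"
      using C True by (simp add: scalar_prod_def)
    moreover have "0 \<le> Re ((\<rho> *\<^sub>v ?x) \<bullet>c ?x)" by (rule psd[rule_format]) simp
    ultimately show ?thesis using k0 by simp
  next
    case False
    define b where "b = (if k = 0 then 1 else 0::nat)"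
    have b: "b < d" "b \<noteq> k" using that False by (auto simp: b_def)
    have "(\<rho> *\<^sub>v vec d (\<lambda>l. if l = k then 1 else if l = b then 0 else 0)) \<bullet>c vec d (\<lambda>l. if l = k then 1 else if l = b then 0 else 0)
       = \<rho> $$ (k,k)" using quad_form[OF C that b(1) b(2)[symmetric], of 0] by simp
    moreover have "vec d (\<lambda>l. if l = k then 1 else if l = b then 0 else 0) \<in> carrier_vec d" by simp
    ultimately show ?thesis using psd by fastforce
  qed
  then show "0 \<le> Re (\<rho> $$ (a,a))" using a by simp
  have "(\<Sum>k<d. Re (\<rho> $$ (k,k))) = 1"
  proof -
    have "mat_trace \<rho> = 1" using dm by (simp add: density_mat_def)
    then have "Re (\<Sum>k<d. \<rho> $$ (k,k)) = 1" using C by (simp add: mat_trace_def)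
    then show ?thesis by (simp add: Re_sum)
  qed
  moreover have "Re (\<rho> $$ (a,a)) \<le> (\<Sum>k<d. Re (\<rho> $$ (k,k)))"
    by (rule member_le_sum) (use a nn in auto)
  ultimately show "Re (\<rho> $$ (a,a)) \<le> 1" by simp
qed

lemma density_offdiag:
  assumes dm: "density_mat d \<rho>" and ab: "a < d" "b < d" "a \<noteq> b"
  shows "cmod (\<rho> $$ (a,b)) \<le> 1"
proof (cases "\<rho> $$ (a,b) = 0")
  case True then show ?thesis by simp
next
  case False
  have C: "\<rho> \<in> carrier_mat d d" using dm by (simp add: density_mat_def)
  have psd: "\<forall>v \<in> carrier_vec d. 0 \<le> Re ((\<rho> *\<^sub>v v) \<bullet>c v)" using dm by (simp add: density_mat_def)
  define r where "r = \<rho> $$ (a,b)"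
  define z where "z = - cnj r / complex_of_real (cmod r)"
  have nr: "cmod r > 0" using False by (simp add: r_def)
  have rz: "r * z = - complex_of_real (cmod r)"
  proof -
    have "r * z = - (r * cnj r) / complex_of_real (cmod r)" by (simp add: z_def)
    also have "r * cnj r = complex_of_real ((cmod r)^2)" by (simp add: complex_mult_cnj cmod_def)
    finally show ?thesis using nr by (simp add: power2_eq_square)
  qed
  have zz: "z * cnj z = 1"
  proof -
    have "z * cnj z = (r * cnj r) / complex_of_real ((cmod r)^2)"
      by (simp add: z_def power2_eq_square)
    also have "r * cnj r = complex_of_real ((cmod r)^2)" by (simp add: complex_mult_cnj cmod_def)
    finally show ?thesis using nr by simp
  qed
  have ba: "\<rho> $$ (b,a) = cnj r" using density_herm[OF dm ab(2) ab(1)] density_herm[OF dm ab(1) ab(2)]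
    by (simp add: r_def)
  have q: "(\<rho> *\<^sub>v vec d (\<lambda>k. if k = a then 1 else if k = b then z else 0)) \<bullet>c vec d (\<lambda>k. if k = a then 1 else if k = b then z else 0)
     = \<rho> $$ (a,a) + r * z + (cnj r * cnj z) + \<rho> $$ (b,b) * (z * cnj z)"
    using quad_form[OF C ab, of z] ba by (simp add: r_def algebra_simps)
  have "0 \<le> Re (\<rho> $$ (a,a) + r * z + (cnj r * cnj z) + \<rho> $$ (b,b) * (z * cnj z))"
    using psd q vec_carrier[of d "\<lambda>k. if k = a then 1 else if k = b then z else 0"] by fastforce
  also have "\<dots> = Re (\<rho> $$ (a,a)) + Re (\<rho> $$ (b,b)) - 2 * cmod r"
  proof -
    have "cnj r * cnj z = cnj (r * z)" by simp
    then show ?thesis using rz zz by simp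
  qed
  finally have "2 * cmod r \<le> Re (\<rho> $$ (a,a)) + Re (\<rho> $$ (b,b))" by simp
  also have "\<dots> \<le> 2" using density_diag(3)[OF dm ab(1)] density_diag(3)[OF dm ab(2)] by simp
  finally show ?thesis by (simp add: r_def)
qed

lemma density_entry:
  assumes dm: "density_mat d \<rho>" and ab: "a < d" "b < d"
  shows "cmod (\<rho> $$ (a,b)) \<le> 1"
proof (cases "a = b")
  case True
  have "cmod (\<rho> $$ (a,a)) = \<bar>Re (\<rho> $$ (a,a))\<bar>" using density_diag(1)[OF dm ab(1)]
    by (simp add: cmod_def)
  then show ?thesis using True density_diag(2,3)[OF dm ab(1)] by simp
next
  case False then show ?thesis using density_offdiag[OF dm ab] by simp
qed

lemma three_elems:
  assumes "finite T" "2 < card T"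
  obtains a b c where "a \<in> T" "b \<in> T" "c \<in> T" "a \<noteq> b" "a \<noteq> c" "b \<noteq> c"
proof -
  have "T \<noteq> {}" using assms by auto
  then obtain a where a: "a \<in> T" by blast
  have c1: "card (T - {a}) = card T - 1" using a assms by simp
  have "T - {a} \<noteq> {}"
  proof
    assume h: "T - {a} = {}" then have "card (T - {a}) = 0" by (simp only: h card.empty)
    with c1 assms show False by simp
  qed
  then obtain b where b: "b \<in> T - {a}" by blast
  have c2: "card (T - {a} - {b}) = card T - 2" using a b assms by (simp add: c1)
  have "T - {a} - {b} \<noteq> {}"
  proof
    assume h: "T - {a} - {b} = {}" then have "card (T - {a} - {b}) = 0" by (simp only: h card.empty)
    with c2 assms show False by simp
  qed
  then obtain c where c: "c \<in> T - {a} - {b}" by blast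
  show ?thesis using that[of a b c] a b c by auto
qed

lemma c7_no_triangle:
  assumes "t1 < 7" "t2 < 7" "t3 < 7" "t1 \<noteq> t2" "t1 \<noteq> t3" "t2 \<noteq> t3"
    "\<not> c7b t1 t2" "\<not> c7b t1 t3" "\<not> c7b t2 t3"
  shows False
  using less7_cases[OF assms(1)] less7_cases[OF assms(2)] less7_cases[OF assms(3)] assms(4-)
  by (elim disjE) (simp_all add: c7b_def)

lemma indep_small:
  assumes T: "T \<subseteq> {..<7}" and ind: "\<forall>t\<in>T. \<forall>s\<in>T. t \<noteq> s \<longrightarrow> \<not> c7b t s"
  shows "card T \<le> 2"
proof (rule ccontr)
  assume "\<not> card T \<le> 2"
  have "finite T" using T finite_subset by blast
  moreover from \<open>\<not> card T \<le> 2\<close> have "2 < card T" by simp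
  ultimately obtain a b c where "a \<in> T" "b \<in> T" "c \<in> T" "a \<noteq> b" "a \<noteq> c" "b \<noteq> c"
    by (rule three_elems)
  then show False using c7_no_triangle[of a b c] ind T by blast
qed

lemma trace_mult:
  assumes "A \<in> carrier_mat d d" "B \<in> carrier_mat d d"
  shows "mat_trace (A * B) = (\<Sum>r<d. \<Sum>c<d. A $$ (r,c) * B $$ (c,r))"
  using assms by (simp add: mat_trace_def scalar_prod_def atLeast0LessThan)

lemma pauli_entry_norm: "cmod (pauli_entry p x y) \<le> 1"
  by (cases p) auto

lemma pauli_mat_norm:
  assumes "c < 2^length ps" "r < 2^length ps"
  shows "cmod (pauli_mat ps $$ (c,r)) \<le> 1"
proof -
  have "cmod (pauli_mat ps $$ (c,r)) \<le> (\<Prod>k<length ps. cmod (pauli_entry (ps ! k) (c div 2 ^ k mod 2) (r div 2 ^ k mod 2)))"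
    using assms by (simp add: pauli_mat_index norm_prod_le)
  also have "\<dots> \<le> 1" by (rule prod_le_1) (simp_all add: pauli_entry_norm)
  finally show ?thesis .
qed

lemma trace_bound:
  assumes dm: "density_mat (2^length ps) \<rho>"
  shows "\<bar>Re (mat_trace (\<rho> * pauli_mat ps))\<bar> \<le> real (2^length ps * 2^length ps)"
proof -
  let ?d = "2^length ps :: nat"
  have C: "\<rho> \<in> carrier_mat ?d ?d" using dm by (simp add: density_mat_def)
  have "\<bar>Re (mat_trace (\<rho> * pauli_mat ps))\<bar> \<le> cmod (mat_trace (\<rho> * pauli_mat ps))"
    by (rule abs_Re_le_cmod)
  also have "\<dots> = cmod (\<Sum>r<?d. \<Sum>c<?d. \<rho> $$ (r,c) * pauli_mat ps $$ (c,r))"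
    using C by (simp add: trace_mult)
  also have "\<dots> \<le> (\<Sum>r<?d. cmod (\<Sum>c<?d. \<rho> $$ (r,c) * pauli_mat ps $$ (c,r)))"
    by (rule norm_sum)
  also have "\<dots> \<le> (\<Sum>r<?d. \<Sum>c<?d. cmod (\<rho> $$ (r,c) * pauli_mat ps $$ (c,r)))"
    by (intro sum_mono norm_sum)
  also have "\<dots> \<le> (\<Sum>r<?d. \<Sum>c<(?d::nat). (1::real))"
  proof (intro sum_mono)
    fix r c assume "r \<in> {..<?d}" "c \<in> {..<?d}"
    then show "cmod (\<rho> $$ (r,c) * pauli_mat ps $$ (c,r)) \<le> 1"
      using density_entry[OF dm, of r c] pauli_mat_norm[of c ps r]
      by (simp add: norm_mult mult_le_one)
  qed
  also have "\<dots> = real (?d * ?d)" by simp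
  finally show ?thesis .
qed

definition rho :: "nat \<Rightarrow> complex mat" where
  "rho d = mat d d (\<lambda>(r,c). complex_of_real (uvec r * uvec c / 44))"

lemma uvec_big: "8 \<le> r \<Longrightarrow> uvec r = 0" by (simp add: uvec_def)

lemma sum_uvec:
  assumes "8 \<le> d"
  shows "(\<Sum>r<d. f r * uvec r) = (\<Sum>r<8. f r * uvec r)"
  using assms by (intro sum.mono_neutral_right) (auto simp: uvec_big)

lemma rho_density:
  assumes d: "8 \<le> d"
  shows "density_mat d (rho d)"
  unfolding density_mat_def
proof (intro conjI ballI)
  show "rho d \<in> carrier_mat d d" by (simp add: rho_def)
  show "conj_transpose (rho d) = rho d"
    by (rule eq_matI) (auto simp: conj_transpose_def rho_def mult.commute)
  show "mat_trace (rho d) = 1"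
  proof -
    have "mat_trace (rho d) = complex_of_real ((\<Sum>r<d. uvec r * uvec r) / 44)"
      by (simp add: mat_trace_def rho_def sum_divide_distrib)
    also have "(\<Sum>r<d. uvec r * uvec r) = (\<Sum>r<8. uvec r * uvec r)" by (rule sum_uvec[OF d])
    also have "\<dots> = 44" using uvec_sq by (simp add: power2_eq_square)
    finally show ?thesis by simp
  qed
  fix v :: "complex vec" assume v: "v \<in> carrier_vec d"
  define s where "s = (\<Sum>l<d. complex_of_real (uvec l) * v $ l)"
  have rv: "(rho d *\<^sub>v v) $ k = complex_of_real (uvec k / 44) * s" if "k < d" for k
  proof -
    have "(rho d *\<^sub>v v) $ k = (\<Sum>l<d. complex_of_real (uvec k * uvec l / 44) * v $ l)"
      using that v by (simp add: rho_def scalar_prod_def atLeast0LessThan)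
    also have "\<dots> = complex_of_real (uvec k / 44) * s"
      by (simp add: s_def sum_distrib_left mult.assoc)
    finally show ?thesis .
  qed
  have "(rho d *\<^sub>v v) \<bullet>c v = (\<Sum>k<d. (rho d *\<^sub>v v) $ k * cnj (v $ k))"
    using v by (simp add: scalar_prod_def atLeast0LessThan)
  also have "\<dots> = (\<Sum>k<d. complex_of_real (uvec k / 44) * s * cnj (v $ k))"
    by (intro sum.cong) (simp_all add: rv)
  also have "\<dots> = s * cnj s / 44"
    by (simp add: s_def sum_distrib_left sum_distrib_right sum_divide_distrib mult.commute mult.left_commute)
  also have "s * cnj s / 44 = complex_of_real (((Re s)^2 + (Im s)^2) / 44)"
    by (simp only: complex_mult_cnj of_real_divide of_real_numeral)
  finally have "(rho d *\<^sub>v v) \<bullet>c v = complex_of_real (((Re s)^2 + (Im s)^2) / 44)" .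
  then have "Re ((rho d *\<^sub>v v) \<bullet>c v) = ((Re s)^2 + (Im s)^2) / 44" by (simp only: Re_complex_of_real)
  moreover have "0 \<le> ((Re s)^2 + (Im s)^2) / 44" by simp
  ultimately show "0 \<le> Re ((rho d *\<^sub>v v) \<bullet>c v)" by linarith
qed

lemma two_pow_ge8: "(8::nat) \<le> 2^(3+k)"
proof -
  have "(2::nat)^3 \<le> 2^(3+k)" by (rule power_increasing) simp_all
  then show ?thesis by simp
qed

lemma Sreal_low:
  assumes inj: "inj_on \<phi> {..<7}" and iH: "i \<in> \<phi> ` {..<7}" and c: "c < 8" and r: "r < 8"
  shows "pauli_mat (Sreal n E \<phi> i) $$ (c,r) = pauli_mat (Tstr (the_inv_into {..<7} \<phi> i)) $$ (c,r)"
proof -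
  let ?t = "the_inv_into {..<7} \<phi> i"
  have t: "?t < 7" using the_inv_into_into[OF inj iH, of "{..<7}"] by simp
  have lT: "length (Tstr ?t) = 3" by (rule Tstr_len[OF t])
  have blk: "blk \<phi> i = Tstr ?t" using iH by (simp add: blk_def)
  have big: "8 \<le> (2::nat)^(3+k)" for k by (rule two_pow_ge8)
  have cr: "c < 2^length (Sreal n E \<phi> i)" "r < 2^length (Sreal n E \<phi> i)"
    using c r big[of "n*n"] by (simp_all add: Sreal_len[OF inj])
  have "pauli_mat (Sreal n E \<phi> i) $$ (c,r) =
    (\<Prod>k<3+n*n. pauli_entry (Sreal n E \<phi> i ! k) (c div 2 ^ k mod 2) (r div 2 ^ k mod 2))"
    using cr by (simp add: pauli_mat_index Sreal_len[OF inj])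
  also have "\<dots> = (\<Prod>k<3. pauli_entry (Sreal n E \<phi> i ! k) (c div 2 ^ k mod 2) (r div 2 ^ k mod 2)) *
     (\<Prod>k<n*n. pauli_entry (Sreal n E \<phi> i ! (3+k)) (c div 2 ^ (3+k) mod 2) (r div 2 ^ (3+k) mod 2))"
    by (rule prod_lessThan_add)
  also have "(\<Prod>k<n*n. pauli_entry (Sreal n E \<phi> i ! (3+k)) (c div 2 ^ (3+k) mod 2) (r div 2 ^ (3+k) mod 2)) = 1"
  proof (rule prod.neutral, intro ballI)
    fix k assume k: "k \<in> {..<n*n}"
    have "c div 2^(3+k) = 0" "r div 2^(3+k) = 0" using c r big[of k] by (simp_all add: div_less)
    moreover have "Sreal n E \<phi> i ! (3+k) = pop n E \<phi> i k" using k blk lT by (simp add: Sreal_def nth_append)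
    moreover have "pop n E \<phi> i k = PZ \<or> pop n E \<phi> i k = PI" using iH by (simp add: pop_def)
    ultimately show "pauli_entry (Sreal n E \<phi> i ! (3+k)) (c div 2 ^ (3+k) mod 2) (r div 2 ^ (3+k) mod 2) = 1"
      by auto
  qed
  also have "(\<Prod>k<3. pauli_entry (Sreal n E \<phi> i ! k) (c div 2 ^ k mod 2) (r div 2 ^ k mod 2)) =
      (\<Prod>k<3. pauli_entry (Tstr ?t ! k) (c div 2 ^ k mod 2) (r div 2 ^ k mod 2))"
    using blk lT by (intro prod.cong) (simp_all add: Sreal_def nth_append)
  also have "\<dots> = pauli_mat (Tstr ?t) $$ (c,r)"
    using c r lT by (simp add: pauli_mat_index)
  finally show ?thesis by simp
qed

lemma expect_val:
  assumes inj: "inj_on \<phi> {..<7}" and iH: "i \<in> \<phi> ` {..<7}"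
  shows "Re (mat_trace (rho (2^(3+n*n)) * pauli_mat (Sreal n E \<phi> i))) = Tval (the_inv_into {..<7} \<phi> i) / 44"
proof -
  let ?t = "the_inv_into {..<7} \<phi> i"
  let ?d = "2^(3+n*n) :: nat"
  let ?P = "pauli_mat (Sreal n E \<phi> i)"
  have t: "?t < 7" using the_inv_into_into[OF inj iH, of "{..<7}"] by simp
  have d8: "8 \<le> ?d" by (rule two_pow_ge8)
  have CP: "?P \<in> carrier_mat ?d ?d" using pauli_mat_dim(1)[of "Sreal n E \<phi> i"] by (simp add: Sreal_len[OF inj])
  have CR: "rho ?d \<in> carrier_mat ?d ?d" by (simp add: rho_def)
  let ?g = "\<lambda>r c. complex_of_real (uvec r * uvec c / 44) * ?P $$ (c,r)"
  have "mat_trace (rho ?d * ?P) = (\<Sum>r<?d. \<Sum>c<?d. rho ?d $$ (r,c) * ?P $$ (c,r))"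
    by (rule trace_mult[OF CR CP])
  also have "\<dots> = (\<Sum>r<?d. \<Sum>c<?d. ?g r c)"
    by (intro sum.cong refl) (simp add: rho_def)
  also have "\<dots> = (\<Sum>r<8. \<Sum>c<?d. ?g r c)"
    using d8 by (intro sum.mono_neutral_right) (auto simp: uvec_big)
  also have "\<dots> = (\<Sum>r<8. \<Sum>c<8. ?g r c)"
    using d8 by (intro sum.cong refl sum.mono_neutral_right) (auto simp: uvec_big)
  also have "\<dots> = (\<Sum>r<8. \<Sum>c<8. complex_of_real (uvec r * uvec c) * pauli_mat (Tstr ?t) $$ (c, r)) / 44"
    by (simp add: Sreal_low[OF inj iH] sum_divide_distrib)
  also have "\<dots> = complex_of_real (Tval ?t) / 44" by (simp only: Tval_eq[OF t])
  also have "\<dots> = complex_of_real (Tval ?t / 44)" by simp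
  finally show ?thesis by (simp only: Re_complex_of_real)
qed

definition wH :: "(nat \<Rightarrow> nat) \<Rightarrow> nat \<Rightarrow> real" where
  "wH \<phi> i = (if i \<in> \<phi> ` {..<7} then 1 else 0)"

lemma beta_lower:
  assumes inj: "inj_on \<phi> {..<7}" and Hn: "\<phi> ` {..<7} \<subseteq> {..<n}"
  shows "252/121 \<le> beta_real n (3+n*n) (Sreal n E \<phi>) (wH \<phi>)"
proof -
  let ?d = "2^(3+n*n) :: nat"
  let ?H = "\<phi> ` {..<7}"
  let ?f = "\<lambda>\<rho>. \<Sum>i<n. wH \<phi> i * (Re (mat_trace (\<rho> * pauli_mat (Sreal n E \<phi> i))))\<^sup>2"
  have mem: "rho ?d \<in> {\<rho>. density_mat ?d \<rho>}" using rho_density[OF two_pow_ge8] by simp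
  have val: "?f (rho ?d) = 252/121"
  proof -
    have "?f (rho ?d) = (\<Sum>i<n. if i \<in> ?H then 36/121 else 0)"
    proof (intro sum.cong refl)
      fix i assume "i \<in> {..<n}"
      show "wH \<phi> i * (Re (mat_trace (rho ?d * pauli_mat (Sreal n E \<phi> i))))\<^sup>2 = (if i \<in> ?H then 36/121 else 0)"
      proof (cases "i \<in> ?H")
        case True
        have tlt: "the_inv_into {..<7} \<phi> i < 7" using the_inv_into_into[OF inj True, of "{..<7}"] by simp
        have e: "Re (mat_trace (rho ?d * pauli_mat (Sreal n E \<phi> i))) = Tval (the_inv_into {..<7} \<phi> i) / 44"
          by (rule expect_val[OF inj True])
        show ?thesis unfolding wH_def e using True Tval_sq[OF tlt] by simp
      qed (simp add: wH_def)
    qed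
    also have "\<dots> = (\<Sum>i\<in>?H. 36/121)"
      using Hn by (simp add: sum.If_cases Int_absorb1)
    also have "\<dots> = 252/121" using card_image[OF inj] by simp
    finally show ?thesis .
  qed
  have bdd: "bdd_above (?f ` {\<rho>. density_mat ?d \<rho>})"
  proof (rule bdd_aboveI2)
    fix \<rho> assume "\<rho> \<in> {\<rho>. density_mat ?d \<rho>}"
    then have dm: "density_mat ?d \<rho>" by simp
    show "?f \<rho> \<le> (\<Sum>i<n. wH \<phi> i * (real (?d * ?d))\<^sup>2)"
    proof (intro sum_mono mult_left_mono)
      fix i assume "i \<in> {..<n}"
      have "\<bar>Re (mat_trace (\<rho> * pauli_mat (Sreal n E \<phi> i)))\<bar> \<le> real (?d * ?d)"
        using trace_bound[of "Sreal n E \<phi> i" \<rho>] dm by (simp add: Sreal_len[OF inj])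
      then show "(Re (mat_trace (\<rho> * pauli_mat (Sreal n E \<phi> i))))\<^sup>2 \<le> (real (?d * ?d))\<^sup>2"
        by (metis abs_ge_zero power2_abs power_mono)
      show "0 \<le> wH \<phi> i" by (simp add: wH_def)
    qed
  qed
  have "?f (rho ?d) \<le> beta_real n (3+n*n) (Sreal n E \<phi>) (wH \<phi>)"
    unfolding beta_real_def by (rule cSup_upper) (use mem bdd in auto)
  then show ?thesis using val by simp
qed

lemma alpha_upper:
  assumes g: "is_graph n E" and inj: "inj_on \<phi> {..<7}" and Hn: "\<phi> ` {..<7} \<subseteq> {..<n}"
    and pat: "\<forall>t<7. \<forall>s<7. t \<noteq> s \<longrightarrow> ({\<phi> t, \<phi> s} \<in> E \<longleftrightarrow> c7b t s)"
  shows "alpha n E (wH \<phi>) \<le> 2"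
proof -
  let ?H = "\<phi> ` {..<7}"
  have fin: "finite {I. independent n E I}"
    by (rule finite_subset[of _ "Pow {..<n}"]) (auto simp: independent_def)
  have ne: "{I. independent n E I} \<noteq> {}"
    using graph_no_loop[OF g] by (auto simp: independent_def intro!: exI[of _ "{}"])
  have le: "(\<Sum>i\<in>I. wH \<phi> i) \<le> 2" if ind: "independent n E I" for I
  proof -
    have finI: "finite I" using ind finite_subset by (auto simp: independent_def)
    have "(\<Sum>i\<in>I. wH \<phi> i) = real (card (I \<inter> ?H))"
      using finI by (simp add: wH_def sum.If_cases)
    also have "card (I \<inter> ?H) = card (the_inv_into {..<7} \<phi> ` (I \<inter> ?H))"
    proof (rule card_image[symmetric])
      show "inj_on (the_inv_into {..<7} \<phi>) (I \<inter> ?H)"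
        using inj_on_the_inv_into[OF inj] by (rule inj_on_subset) auto
    qed
    also have "\<dots> \<le> 2"
    proof (rule indep_small)
      show "the_inv_into {..<7} \<phi> ` (I \<inter> ?H) \<subseteq> {..<7}"
        using the_inv_into_into[OF inj] by auto
      show "\<forall>t\<in>the_inv_into {..<7} \<phi> ` (I \<inter> ?H). \<forall>s\<in>the_inv_into {..<7} \<phi> ` (I \<inter> ?H). t \<noteq> s \<longrightarrow> \<not> c7b t s"
      proof (intro ballI impI)
        fix t s assume ts: "t \<in> the_inv_into {..<7} \<phi> ` (I \<inter> ?H)" "s \<in> the_inv_into {..<7} \<phi> ` (I \<inter> ?H)" "t \<noteq> s"
        then obtain x y where xy: "x \<in> I" "x \<in> ?H" "y \<in> I" "y \<in> ?H" "t = the_inv_into {..<7} \<phi> x" "s = the_inv_into {..<7} \<phi> y"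
          by auto
        have "t < 7" "s < 7" using xy the_inv_into_into[OF inj] by auto
        moreover have "\<phi> t = x" "\<phi> s = y" using xy f_the_inv_into_f[OF inj] by auto
        moreover have "{x,y} \<notin> E" using ind xy by (auto simp: independent_def)
        ultimately show "\<not> c7b t s" using pat ts(3) by metis
      qed
    qed
    finally show ?thesis by simp
  qed
  show ?thesis unfolding alpha_def using fin ne le by (simp add: Max_le_iff)
qed

lemma not_hbar:
  assumes g: "is_graph n E" and inj: "inj_on \<phi> {..<7}" and Hn: "\<phi> ` {..<7} \<subseteq> {..<n}"
    and pat: "\<forall>t<7. \<forall>s<7. t \<noteq> s \<longrightarrow> ({\<phi> t, \<phi> s} \<in> E \<longleftrightarrow> c7b t s)"
  shows "\<not> hbar_perfect n E"
proof
  assume "hbar_perfect n E"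
  moreover have "realization n E (3+n*n) (Sreal n E \<phi>)" by (rule realization_Sreal[OF g inj pat])
  moreover have "\<forall>i<n. 0 \<le> wH \<phi> i" by (simp add: wH_def)
  ultimately have "beta_real n (3+n*n) (Sreal n E \<phi>) (wH \<phi>) = alpha n E (wH \<phi>)"
    unfolding hbar_perfect_def by blast
  then show False using beta_lower[OF inj Hn, of E] alpha_upper[OF g inj Hn pat] by simp
qed

definition avoidS :: "'b set \<Rightarrow> (nat \<Rightarrow> 'b set) \<Rightarrow> (nat \<Rightarrow> 'b set) \<Rightarrow> nat \<Rightarrow> 'b set set" where
  "avoidS U A F K = {E. E \<subseteq> U \<and> (\<forall>l<K. E \<inter> A l \<noteq> F l)}"

lemma avoidS_step_card:
  assumes U: "finite U" and AU: "A K \<subseteq> U" and FA: "F K \<subseteq> A K"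
    and disj: "\<forall>l<K. A l \<inter> A K = {}"
  shows "card (avoidS U A F K) = 2^card (A K) * card {E \<in> avoidS U A F K. E \<inter> A K = F K}"
proof -
  let ?C = "{E \<in> avoidS U A F K. E \<inter> A K = F K}"
  let ?f = "\<lambda>(G, E). (E - A K) \<union> G"
  let ?g = "\<lambda>E'. (E' \<inter> A K, (E' - A K) \<union> F K)"
  have finA: "finite (A K)" using U AU finite_subset by blast
  have finS: "finite (avoidS U A F K)"
    by (rule finite_subset[of _ "Pow U"]) (auto simp: avoidS_def U)
  have keep: "((E - A K) \<union> G) \<inter> A l = E \<inter> A l" if "l < K" "G \<subseteq> A K" for E G l
    using disj that by blast
  have bij: "bij_betw ?f (Pow (A K) \<times> ?C) (avoidS U A F K)"
  proof (rule bij_betw_byWitness[where f' = ?g])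
    show "\<forall>a\<in>Pow (A K) \<times> ?C. ?g (?f a) = a"
    proof
      fix a assume "a \<in> Pow (A K) \<times> ?C"
      then obtain G E where a: "a = (G, E)" "G \<subseteq> A K" "E \<inter> A K = F K" by auto
      have "((E - A K) \<union> G) \<inter> A K = G" using a by blast
      moreover have "((E - A K) \<union> G) - A K \<union> F K = E" using a by blast
      ultimately show "?g (?f a) = a" using a by simp
    qed
    show "\<forall>a'\<in>avoidS U A F K. ?f (?g a') = a'" using FA by auto
    show "?f ` (Pow (A K) \<times> ?C) \<subseteq> avoidS U A F K"
    proof
      fix x assume "x \<in> ?f ` (Pow (A K) \<times> ?C)"
      then obtain G E where x: "x = (E - A K) \<union> G" "G \<subseteq> A K" "E \<in> avoidS U A F K" by auto
      then show "x \<in> avoidS U A F K" using keep AU by (auto simp: avoidS_def)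
    qed
    show "?g ` avoidS U A F K \<subseteq> Pow (A K) \<times> ?C"
    proof
      fix y assume "y \<in> ?g ` avoidS U A F K"
      then obtain E' where y: "y = ?g E'" "E' \<in> avoidS U A F K" by auto
      have "((E' - A K) \<union> F K) \<inter> A l = E' \<inter> A l" if "l < K" for l
        using keep[OF that FA] .
      then have "(E' - A K) \<union> F K \<in> avoidS U A F K" using y AU FA by (auto simp: avoidS_def)
      moreover have "((E' - A K) \<union> F K) \<inter> A K = F K" using FA by blast
      ultimately show "y \<in> Pow (A K) \<times> ?C" using y by auto
    qed
  qed
  have "card (avoidS U A F K) = card (Pow (A K) \<times> ?C)" using bij_betw_same_card[OF bij] by simp
  also have "\<dots> = 2^card (A K) * card ?C" using finA by (simp add: card_cartesian_product card_Pow)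
  finally show ?thesis .
qed

lemma avoidS_Suc: "avoidS U A F (Suc K) = avoidS U A F K - {E \<in> avoidS U A F K. E \<inter> A K = F K}"
  by (auto simp: avoidS_def less_Suc_eq)

lemma avoidS_bound:
  assumes U: "finite U" and AU: "\<forall>l<K. A l \<subseteq> U" and FA: "\<forall>l<K. F l \<subseteq> A l"
    and disj: "\<forall>l<K. \<forall>l'<K. l \<noteq> l' \<longrightarrow> A l \<inter> A l' = {}" and ca: "\<forall>l<K. card (A l) \<le> a"
  shows "real (card (avoidS U A F K)) \<le> (1 - 1/2^a)^K * 2^card U"
  using AU FA disj ca
proof (induction K)
  case 0
  have "avoidS U A F 0 = Pow U" by (auto simp: avoidS_def)
  then show ?case using U by (simp add: card_Pow)
next
  case (Suc K)
  let ?C = "{E \<in> avoidS U A F K. E \<inter> A K = F K}"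
  have IH: "real (card (avoidS U A F K)) \<le> (1 - 1/2^a)^K * 2^card U"
    using Suc.prems by (intro Suc.IH) auto
  have finS: "finite (avoidS U A F K)"
    by (rule finite_subset[of _ "Pow U"]) (auto simp: avoidS_def U)
  have st: "card (avoidS U A F K) = 2^card (A K) * card ?C"
    by (rule avoidS_step_card) (use U Suc.prems in auto)
  have "card (avoidS U A F (Suc K)) = card (avoidS U A F K) - card ?C"
    unfolding avoidS_Suc using finS by (intro card_Diff_subset) auto
  then have "real (card (avoidS U A F (Suc K))) = real (card (avoidS U A F K)) - real (card ?C)"
    using finS by (simp add: of_nat_diff card_mono)
  also have "real (card ?C) = real (card (avoidS U A F K)) / 2^card (A K)"
    using st by simp
  also have "real (card (avoidS U A F K)) - real (card (avoidS U A F K)) / 2^card (A K)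
      = real (card (avoidS U A F K)) * (1 - 1/2^card (A K))" by (simp add: algebra_simps)
  also have "\<dots> \<le> real (card (avoidS U A F K)) * (1 - 1/2^a)"
  proof (rule mult_left_mono)
    have "(2::real)^card (A K) \<le> 2^a" using Suc.prems(4) by (intro power_increasing) auto
    then have "1/2^a \<le> 1/(2::real)^card (A K)" by (intro divide_left_mono) auto
    then show "1 - 1/2^card (A K) \<le> 1 - 1/(2::real)^a" by simp
  qed simp
  also have "\<dots> \<le> (1 - 1/2^a)^K * 2^card U * (1 - 1/2^a)"
    by (rule mult_right_mono[OF IH]) (simp add: field_simps)
  also have "\<dots> = (1 - 1/2^a)^Suc K * 2^card U" by simp
  finally show ?case .
qed

definition vx :: "nat \<Rightarrow> nat \<Rightarrow> nat \<Rightarrow> nat" where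
  "vx p l t = 7 * (l div p + (l mod p) * t) + t"

definition Al :: "nat \<Rightarrow> nat \<Rightarrow> nat set set" where
  "Al p l = (\<lambda>(t,s). {vx p l t, vx p l s}) ` {(t,s). t < 7 \<and> s < 7 \<and> t \<noteq> s}"

definition Fl :: "nat \<Rightarrow> nat \<Rightarrow> nat set set" where
  "Fl p l = (\<lambda>(t,s). {vx p l t, vx p l s}) ` {(t,s). t < 7 \<and> s < 7 \<and> t \<noteq> s \<and> c7b t s}"

lemma c7b_sym: assumes "t < 7" "s < 7" shows "c7b t s = c7b s t"
  using less7_cases[OF assms(1)] less7_cases[OF assms(2)] by (elim disjE) (simp_all add: c7b_def)

lemma mod7_aux: "t < 7 \<Longrightarrow> (7 * X + t) mod (7::nat) = t" by presburger

lemma vx_mod: "t < 7 \<Longrightarrow> vx p l t mod 7 = t"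
  unfolding vx_def by (rule mod7_aux)

lemma vx_inj: assumes "t < 7" "s < 7" "vx p l t = vx p l s" shows "t = s"
proof -
  have "vx p l t mod 7 = vx p l s mod 7" using assms(3) by simp
  then show ?thesis using vx_mod[OF assms(1)] vx_mod[OF assms(2)] by simp
qed

lemma vx_mod_eq: assumes "t < 7" "s < 7" "vx p l t = vx p l' s" shows "t = s"
proof -
  have "vx p l t mod 7 = vx p l' s mod 7" using assms(3) by simp
  then show ?thesis using vx_mod[OF assms(1)] vx_mod[OF assms(2)] by simp
qed

lemma vx_lt:
  assumes l: "l < p*p" and n: "49*p \<le> n" and t: "t < 7"
  shows "vx p l t < n"
proof -
  have p: "0 < p" using l by (cases p) auto
  have a: "l div p < p" using l by (simp add: less_mult_imp_div_less)
  have b: "l mod p < p" using p by simp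
  have "(l mod p) * t \<le> (l mod p) * 6" using t by simp
  moreover have "(l mod p) * 6 + 6 \<le> p * 6" using b by linarith
  ultimately have "l div p + (l mod p) * t + 1 \<le> 7 * p" using a by linarith
  then have "7 * (l div p + (l mod p) * t + 1) \<le> 7 * (7 * p)" by (rule mult_le_mono2)
  then have "7 * (l div p + (l mod p) * t) + 7 \<le> 49 * p" by simp
  then show ?thesis using t n by (simp add: vx_def)
qed

lemma vx_line:
  assumes l: "l < p*p" and l': "l' < p*p" and ts: "t \<noteq> s"
    and e1: "vx p l t = vx p l' t" and e2: "vx p l s = vx p l' s"
  shows "l = l'"
proof -
  define a where "a = l div p" define b where "b = l mod p"
  define a' where "a' = l' div p" define b' where "b' = l' mod p"
  have x1: "a + b * t = a' + b' * t" using e1 by (simp add: vx_def a_def b_def a'_def b'_def)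
  have x2: "a + b * s = a' + b' * s" using e2 by (simp add: vx_def a_def b_def a'_def b'_def)
  have i1: "int a + int b * int t = int a' + int b' * int t" using x1 by (metis of_nat_add of_nat_mult)
  have i2: "int a + int b * int s = int a' + int b' * int s" using x2 by (metis of_nat_add of_nat_mult)
  have "(int b - int b') * (int t - int s) = 0" using i1 i2 by (simp add: algebra_simps)
  then have "b = b'" using ts by simp
  then have "a = a'" using x1 by simp
  then show ?thesis using \<open>b = b'\<close> unfolding a_def b_def a'_def b'_def by (metis div_mult_mod_eq)
qed

lemma Al_sub: assumes "l < p*p" "49*p \<le> n" shows "Al p l \<subseteq> all_pairs n"
proof
  fix e assume "e \<in> Al p l"
  then obtain t s where ts: "t < 7" "s < 7" "t \<noteq> s" "e = {vx p l t, vx p l s}" by (auto simp: Al_def)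
  have "vx p l t < n" "vx p l s < n" using vx_lt[OF assms] ts by auto
  moreover have "vx p l t \<noteq> vx p l s" using vx_inj ts by blast
  ultimately show "e \<in> all_pairs n" using ts(4) unfolding all_pairs_def by blast
qed

lemma Fl_sub: "Fl p l \<subseteq> Al p l"
  by (auto simp: Fl_def Al_def)

lemma Al_card: "card (Al p l) \<le> 49"
proof -
  have "card (Al p l) \<le> card {(t,s). t < (7::nat) \<and> s < (7::nat) \<and> t \<noteq> s}"
    unfolding Al_def by (rule card_image_le) (rule finite_subset[of _ "{..<7} \<times> {..<7}"], auto)
  also have "\<dots> \<le> card ({..<7::nat} \<times> {..<7::nat})"
    by (rule card_mono) auto
  also have "\<dots> = 49" by simp
  finally show ?thesis .
qed

lemma Al_disj:
  assumes l: "l < p*p" and l': "l' < p*p" and ne: "l \<noteq> l'"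
  shows "Al p l \<inter> Al p l' = {}"
proof (rule ccontr)
  assume "Al p l \<inter> Al p l' \<noteq> {}"
  then obtain t s t' s' where ts: "t < 7" "s < 7" "t \<noteq> s" "t' < 7" "s' < 7" "t' \<noteq> s'"
    and eq: "{vx p l t, vx p l s} = {vx p l' t', vx p l' s'}"
    by (auto simp: Al_def)
  have "(vx p l t = vx p l' t' \<and> vx p l s = vx p l' s') \<or> (vx p l t = vx p l' s' \<and> vx p l s = vx p l' t')"
    using eq by (auto simp: doubleton_eq_iff)
  then show False
  proof
    assume h: "vx p l t = vx p l' t' \<and> vx p l s = vx p l' s'"
    then have "t = t'" "s = s'" using ts vx_mod_eq by blast+
    then show False using vx_line[OF l l' ts(3)] h ne by simp
  next
    assume h: "vx p l t = vx p l' s' \<and> vx p l s = vx p l' t'"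
    then have "t = s'" "s = t'" using ts vx_mod_eq by blast+
    then show False using vx_line[OF l l' ts(3)] h ne by simp
  qed
qed

lemma hbar_avoid:
  assumes g: "is_graph n E" and h: "hbar_perfect n E" and l: "l < p*p" and n: "49*p \<le> n"
  shows "E \<inter> Al p l \<noteq> Fl p l"
proof
  assume eq: "E \<inter> Al p l = Fl p l"
  let ?\<phi> = "vx p l"
  have inj: "inj_on ?\<phi> {..<7}" using vx_inj by (auto simp: inj_on_def)
  have Hn: "?\<phi> ` {..<7} \<subseteq> {..<n}" using vx_lt[OF l n] by auto
  have pat: "\<forall>t<7. \<forall>s<7. t \<noteq> s \<longrightarrow> ({?\<phi> t, ?\<phi> s} \<in> E \<longleftrightarrow> c7b t s)"
  proof (intro allI impI)
    fix t s :: nat assume ts: "t < 7" "s < 7" "t \<noteq> s"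
    have inA: "{?\<phi> t, ?\<phi> s} \<in> Al p l" using ts by (auto simp: Al_def)
    have "{?\<phi> t, ?\<phi> s} \<in> E \<longleftrightarrow> {?\<phi> t, ?\<phi> s} \<in> Fl p l" using inA eq by blast
    also have "\<dots> \<longleftrightarrow> c7b t s"
    proof
      assume "{?\<phi> t, ?\<phi> s} \<in> Fl p l"
      then obtain t' s' where ts': "t' < 7" "s' < 7" "t' \<noteq> s'" "c7b t' s'"
        and e: "{?\<phi> t', ?\<phi> s'} = {?\<phi> t, ?\<phi> s}" by (auto simp: Fl_def)
      then have "(t' = t \<and> s' = s) \<or> (t' = s \<and> s' = t)"
        using ts vx_inj by (auto simp: doubleton_eq_iff)
      then show "c7b t s" using ts' c7b_sym ts by auto
    next
      assume "c7b t s" then show "{?\<phi> t, ?\<phi> s} \<in> Fl p l" using ts by (auto simp: Fl_def)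
    qed
    finally show "{?\<phi> t, ?\<phi> s} \<in> E \<longleftrightarrow> c7b t s" .
  qed
  show False using not_hbar[OF g inj Hn pat] h by simp
qed

lemma all_pairs_eq: "all_pairs n = {B. B \<subseteq> {..<n} \<and> card B = 2}"
  by (auto simp: all_pairs_def card_2_iff)

lemma card_all_pairs: "card (all_pairs n) = n choose 2"
  unfolding all_pairs_eq by (subst n_subsets) simp_all

lemma count_bound:
  assumes n: "49*p \<le> n"
  shows "real (card {E. is_graph n E \<and> hbar_perfect n E}) \<le> (1 - 1/2^49)^(p*p) * 2^(n choose 2)"
proof -
  have sub: "{E. is_graph n E \<and> hbar_perfect n E} \<subseteq> avoidS (all_pairs n) (Al p) (Fl p) (p*p)"
    using hbar_avoid n by (auto simp: avoidS_def is_graph_def)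
  have fin: "finite (all_pairs n)" unfolding all_pairs_eq
    by (rule finite_subset[of _ "Pow {..<n}"]) auto
  have finS: "finite (avoidS (all_pairs n) (Al p) (Fl p) (p*p))"
    by (rule finite_subset[of _ "Pow (all_pairs n)"]) (auto simp: avoidS_def fin)
  have "card {E. is_graph n E \<and> hbar_perfect n E} \<le> card (avoidS (all_pairs n) (Al p) (Fl p) (p*p))"
    by (rule card_mono[OF finS sub])
  also have "real (card (avoidS (all_pairs n) (Al p) (Fl p) (p*p))) \<le> (1 - 1/2^49)^(p*p) * 2^card (all_pairs n)"
    by (rule avoidS_bound[OF fin]) (use Al_sub n Fl_sub Al_disj Al_card in auto)
  finally show ?thesis by (simp add: card_all_pairs)
qed

lemma choose2_real: "real (n choose 2) = real n * (real n - 1) / 2"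
proof (cases n)
  case 0 then show ?thesis by simp
next
  case (Suc m)
  have "even (n * (n - 1))" by (cases "even n") auto
  then have "real (n * (n - 1) div 2) = real (n * (n - 1)) / 2" by (simp add: real_of_nat_div)
  also have "real (n * (n - 1)) = real n * (real n - 1)" using Suc by (simp add: of_nat_diff algebra_simps)
  finally show ?thesis by (simp add: choose_two)
qed

theorem theorem4:
  shows "\<exists>c::real. c < 1 \<and> (\<exists>N::nat. \<forall>n\<ge>N.
           real (card {E. is_graph n E \<and> hbar_perfect n E})
             \<le> 2 powr (c * real n * (real n - 1) / 2))"
proof -
  define r :: real where "r = 1 - 1/2^49"
  define \<delta> where "\<delta> = - log 2 r"
  have r0: "0 < r" and r1: "r < 1" by (simp_all add: r_def)
  have "log 2 r < log 2 1" using r0 r1 by simp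
  then have d0: "0 < \<delta>" by (simp add: \<delta>_def)
  define c where "c = 1 - \<delta> / 4802"
  have c1: "c < 1" using d0 by (simp add: c_def)
  have main: "real (card {E. is_graph n E \<and> hbar_perfect n E}) \<le> 2 powr (c * real n * (real n - 1) / 2)"
    if n: "98 \<le> n" for n
  proof -
    define p where "p = n div 49"
    have p49: "49 * p \<le> n" by (simp add: p_def)
    have p98: "n \<le> 98 * p"
    proof -
      have "n < 49 * p + 49" unfolding p_def by linarith
      then show ?thesis using n by linarith
    qed
    define M where "M = real n * (real n - 1) / 2"
    define K where "K = p * p"
    have cnt: "real (card {E. is_graph n E \<and> hbar_perfect n E}) \<le> r^K * 2^(n choose 2)"
      using count_bound[OF p49] by (simp add: r_def K_def)
    have rK: "r^K = 2 powr (real K * log 2 r)"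
    proof -
      have "r = 2 powr (log 2 r)" using r0 by simp
      then have "r^K = (2 powr (log 2 r))^K" by simp
      also have "\<dots> = 2 powr (real K * log 2 r)" by (rule powr_power) simp
      finally show ?thesis .
    qed
    have twoM: "(2::real)^(n choose 2) = 2 powr M"
      unfolding M_def choose2_real[symmetric] by (rule powr_realpow[symmetric]) simp
    have "r^K * 2^(n choose 2) = 2 powr (real K * log 2 r + M)"
      by (simp add: rK twoM powr_add)
    also have "\<dots> \<le> 2 powr (c * real n * (real n - 1) / 2)"
    proof (rule powr_mono)
      have nn: "(real n)^2 \<le> 9604 * real K"
      proof -
        have "real n \<le> 98 * real p" using p98 by (metis of_nat_le_iff of_nat_mult of_nat_numeral)
        then have "(real n)^2 \<le> (98 * real p)^2" by (intro power_mono) simp_all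
        then show ?thesis by (simp add: K_def power2_eq_square)
      qed
      have M1: "M \<le> (real n)^2 / 2" by (simp add: M_def power2_eq_square algebra_simps)
      have M0: "0 \<le> M" using n by (simp add: M_def)
      have "\<delta> * M \<le> \<delta> * (4802 * real K)"
        using M1 nn d0 by (intro mult_left_mono) simp_all
      then have "real K * log 2 r + M \<le> c * M" by (simp add: c_def \<delta>_def algebra_simps)
      then show "real K * log 2 r + M \<le> c * real n * (real n - 1) / 2" by (simp add: M_def)
    qed simp
    finally show ?thesis using cnt by linarith
  qed
  show ?thesis using c1 main by blast
qed

end
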